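(* Let $r\ge2$ be even. For any $n\ge r$, $A>0$ and $\lambda\in[0,1]$, there exists $f\in C^r[-1,1]$, nonnegative on $[-1,1]$ and identically $0$ on $[-1,-1/2]$, such that every algebraic polynomial $P_n$ of degree $\le n$ which is nonnegative on $(\lambda-1/n,\lambda)$ and satisfies $P_n^{(i)}(\lambda)=f^{(i)}(\lambda)$ for $0\le i\le r$ obeys $$\|f-P_n\|>A\,\|f^{(r)}\|.$$
   Context: $\|\cdot\|$ is the sup norm on $[-1,1]$. *)

theory Defs
  imports "HOL-Analysis.Analysis" "HOL-Computational_Algebra.Polynomial"
begin

definition supnorm :: "(real \<Rightarrow> real) \<Rightarrow> real" where
  "supnorm g = (SUP x\<in>{-1..1}. \<bar>g x\<bar>)"

definition Cr_with_derivs :: "nat \<Rightarrow> (real \<Rightarrow> real) \<Rightarrow> (nat \<Rightarrow> real \<Rightarrow> real) \<Rightarrow> bool" where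
  "Cr_with_derivs r f D \<longleftrightarrow>
     (\<forall>x\<in>{-1..1}. D 0 x = f x) \<and>
     (\<forall>k<r. \<forall>x\<in>{-1..1}. (D k has_real_derivative D (Suc k) x) (at x within {-1..1})) \<and>
     continuous_on {-1..1} (D r)"

end

theory Submission
  imports Defs
begin


lemma deriv_union:
  assumes "(f has_field_derivative D) (at x within S)" "(f has_field_derivative D) (at x within T)"
  shows "(f has_field_derivative D) (at x within (S \<union> T))"
  using assms unfolding has_field_derivative_iff unfolding at_within_union by (rule filterlim_sup)

definition pw :: "real poly \<Rightarrow> real \<Rightarrow> real" where
  "pw p y = (if \<bar>y\<bar> \<le> 1 then poly p y else 0)"

lemma pw_deriv:
  fixes p :: "real poly"
  assumes "poly p 1 = 0" "poly p (-1) = 0" "poly (pderiv p) 1 = 0" "poly (pderiv p) (-1) = 0"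
  shows "(pw p has_real_derivative pw (pderiv p) y) (at y)"
proof -
  consider "\<bar>y\<bar> < 1" | "y > 1" | "y < -1" | "y = 1" | "y = -1" by linarith
  then show ?thesis
  proof cases
    case 1
    show ?thesis
      by (rule has_field_derivative_transform_within_open[of "\<lambda>x. poly p x" _ _ "{-1<..<1}"])
         (use 1 in \<open>auto simp: pw_def\<close>)
  next
    case 2
    have e: "pw (pderiv p) y = 0" using 2 by (simp add: pw_def)
    show ?thesis unfolding e
      by (rule has_field_derivative_transform_within_open[of "\<lambda>x. 0" _ _ "{1<..}"])
         (use 2 in \<open>auto simp: pw_def\<close>)
  next
    case 3
    have e: "pw (pderiv p) y = 0" using 3 by (simp add: pw_def)
    show ?thesis unfolding e
      by (rule has_field_derivative_transform_within_open[of "\<lambda>x. 0" _ _ "{..<-1}"])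
         (use 3 in \<open>auto simp: pw_def\<close>)
  next
    case 4
    have a: "(pw p has_real_derivative pw (pderiv p) y) (at y within {..1})"
    proof (rule has_field_derivative_transform_within[of "\<lambda>x. poly p x" _ _ _ 1])
      show "((\<lambda>x. poly p x) has_real_derivative pw (pderiv p) y) (at y within {..1})"
        using 4 by (auto simp: pw_def intro: has_field_derivative_at_within)
    qed (use 4 in \<open>auto simp: pw_def dist_real_def\<close>)
    have b: "(pw p has_real_derivative pw (pderiv p) y) (at y within {1..})"
    proof (rule has_field_derivative_transform_within[of "\<lambda>x. 0" _ _ _ 1])
      show "((\<lambda>x. 0) has_real_derivative pw (pderiv p) y) (at y within {1..})"
        using 4 assms by (simp add: pw_def)
    qed (use 4 assms in \<open>auto simp: pw_def dist_real_def\<close>)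
    have "(pw p has_real_derivative pw (pderiv p) y) (at y within ({..1} \<union> {1..}))"
      by (rule deriv_union[OF a b])
    moreover have "{..1} \<union> {1..} = (UNIV::real set)" by auto
    ultimately show ?thesis by simp
  next
    case 5
    have a: "(pw p has_real_derivative pw (pderiv p) y) (at y within {-1..})"
    proof (rule has_field_derivative_transform_within[of "\<lambda>x. poly p x" _ _ _ 1])
      show "((\<lambda>x. poly p x) has_real_derivative pw (pderiv p) y) (at y within {-1..})"
        using 5 by (auto simp: pw_def intro: has_field_derivative_at_within)
    qed (use 5 in \<open>auto simp: pw_def dist_real_def\<close>)
    have b: "(pw p has_real_derivative pw (pderiv p) y) (at y within {..-1})"
    proof (rule has_field_derivative_transform_within[of "\<lambda>x. 0" _ _ _ 1])
      show "((\<lambda>x. 0) has_real_derivative pw (pderiv p) y) (at y within {..-1})"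
        using 5 assms by (simp add: pw_def)
    qed (use 5 assms in \<open>auto simp: pw_def dist_real_def\<close>)
    have "(pw p has_real_derivative pw (pderiv p) y) (at y within ({-1..} \<union> {..-1}))"
      by (rule deriv_union[OF a b])
    moreover have "{-1..} \<union> {..-1} = (UNIV::real set)" by auto
    ultimately show ?thesis by simp
  qed
qed
lemma poly_bounded:
  fixes q :: "real poly"
  shows "\<exists>B\<ge>0. \<forall>x\<in>{-1..1}. \<bar>poly q x\<bar> \<le> B"
proof -
  have "compact ((\<lambda>x. poly q x) ` {-1..1})"
    by (intro compact_continuous_image) (auto intro: continuous_intros)
  then have "bounded ((\<lambda>x. poly q x) ` {-1..1})" by (rule compact_imp_bounded)
  then obtain B where B: "\<forall>y\<in>(\<lambda>x. poly q x) ` {-1..1}. norm y \<le> B" by (auto simp: bounded_iff)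
  have "\<bar>poly q x\<bar> \<le> max B 0" if "x \<in> {-1..1}" for x
  proof -
    have "norm (poly q x) \<le> B" using B that by blast
    then show ?thesis by simp
  qed
  then show ?thesis by (intro exI[of _ "max B 0"]) auto
qed

lemma higher_pderiv_sum: "(pderiv ^^ k) (sum f A) = (\<Sum>a\<in>A. (pderiv ^^ k) (f a))"
  by (induction A rule: infinite_finite_induct) (auto simp: higher_pderiv_add)

lemma lagrange_bound:
  fixes n k :: nat
  shows "\<exists>C\<ge>0. \<forall>P::real poly. \<forall>M. degree P \<le> n \<longrightarrow> (\<forall>x\<in>{-1..1}. \<bar>poly P x\<bar> \<le> M) \<longrightarrow>
           (\<forall>x\<in>{-1..1}. \<bar>poly ((pderiv^^k) P) x\<bar> \<le> C*M)"
proof -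
  define xn where "xn j = real j / real (Suc n)" for j
  define L where "L j = smult (1 / (\<Prod>m\<in>{..n}-{j}. (xn j - xn m))) (\<Prod>m\<in>{..n}-{j}. [:- xn m, 1:])" for j
  have xn_inj: "i = j" if "xn i = xn j" for i j using that by (simp add: xn_def field_simps)
  have xn_in: "xn j \<in> {-1..1}" if "j \<le> n" for j using that by (simp add: xn_def field_simps)
  have Lval: "poly (L j) (xn i) = (if i = j then 1 else 0)" if "i \<le> n" "j \<le> n" for i j
  proof (cases "i = j")
    case True
    have "(\<Prod>m\<in>{..n}-{j}. (xn j - xn m)) \<noteq> 0" using xn_inj by (auto simp: prod_zero_iff)
    then show ?thesis using True by (simp add: L_def poly_prod)
  next
    case False
    then have "(\<Prod>m\<in>{..n}-{j}. poly [:- xn m, 1:] (xn i)) = 0" using that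
      by (intro prod_zero) (auto intro!: bexI[of _ i])
    then show ?thesis using False by (simp add: L_def poly_prod)
  qed
  have Ldeg: "degree (L j) \<le> n" if "j \<le> n" for j
  proof -
    have "degree (\<Prod>m\<in>{..n}-{j}. [:- xn m, 1:]) \<le> (\<Sum>m\<in>{..n}-{j}. 1)"
      by (rule order_trans[OF degree_prod_sum_le]) auto
    also have "\<dots> = n" using that by simp
    finally show ?thesis unfolding L_def by (rule order_trans[OF degree_smult_le])
  qed
  have "\<forall>j. \<exists>b. b \<ge> 0 \<and> (\<forall>x\<in>{-1..1}. \<bar>poly ((pderiv^^k) (L j)) x\<bar> \<le> b)"
    using poly_bounded by blast
  then obtain B where B: "\<And>j. B j \<ge> 0" "\<And>j x. x \<in> {-1..1} \<Longrightarrow> \<bar>poly ((pderiv^^k) (L j)) x\<bar> \<le> B j"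
    by metis
  show ?thesis
  proof (intro exI[of _ "\<Sum>j\<le>n. B j"] conjI allI impI ballI)
    show "0 \<le> (\<Sum>j\<le>n. B j)" by (simp add: sum_nonneg B)
    fix P :: "real poly" and M x :: real
    assume dP: "degree P \<le> n" and bP: "\<forall>x\<in>{-1..1}. \<bar>poly P x\<bar> \<le> M" and x: "x \<in> {-1..1}"
    have M0: "M \<ge> 0" using bP[rule_format, of 0] by simp
    define Q where "Q = (\<Sum>j\<le>n. smult (poly P (xn j)) (L j))"
    have card: "card (xn ` {..n}) = Suc n"
      by (subst card_image) (auto intro: inj_onI xn_inj)
    have "P = Q"
    proof (rule poly_eqI_degree[of "xn ` {..n}"])
      fix y assume "y \<in> xn ` {..n}"
      then obtain i where i: "i \<le> n" "y = xn i" by auto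
      have "poly Q y = (\<Sum>j\<le>n. if i = j then poly P (xn j) else 0)"
        unfolding Q_def poly_sum using i Lval by (intro sum.cong) auto
      also have "\<dots> = poly P (xn i)" using i by simp
      finally show "poly P y = poly Q y" using i by simp
    next
      show "degree P < card (xn ` {..n})" using dP card by simp
      have "degree Q \<le> n" unfolding Q_def
        by (intro degree_sum_le) (auto intro: order_trans[OF degree_smult_le] Ldeg)
      then show "degree Q < card (xn ` {..n})" using card by simp
    qed
    then have "(pderiv^^k) P = (pderiv^^k) Q" by simp
    also have "\<dots> = (\<Sum>j\<le>n. smult (poly P (xn j)) ((pderiv^^k) (L j)))"
      unfolding Q_def by (simp add: higher_pderiv_sum higher_pderiv_smult)
    finally have "(pderiv^^k) P = (\<Sum>j\<le>n. smult (poly P (xn j)) ((pderiv^^k) (L j)))" .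
    then have "poly ((pderiv^^k) P) x = (\<Sum>j\<le>n. poly P (xn j) * poly ((pderiv^^k) (L j)) x)"
      by (simp add: poly_sum)
    then have "\<bar>poly ((pderiv^^k) P) x\<bar> \<le> (\<Sum>j\<le>n. \<bar>poly P (xn j)\<bar> * \<bar>poly ((pderiv^^k) (L j)) x\<bar>)"
      by (metis (no_types, lifting) abs_mult sum.cong sum_abs)
    also have "\<dots> \<le> (\<Sum>j\<le>n. M * B j)"
      using bP xn_in B x M0 by (intro sum_mono mult_mono) auto
    also have "\<dots> = (\<Sum>j\<le>n. B j) * M" by (simp add: sum_distrib_left mult.commute)
    finally show "\<bar>poly ((pderiv^^k) P) x\<bar> \<le> (\<Sum>j\<le>n. B j) * M" .
  qed
qed



lemma dvd_pderiv_pow: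
  fixes p q :: "real poly"
  assumes "q ^ Suc m dvd p"
  shows "q ^ m dvd pderiv p"
proof -
  obtain s where s: "p = q ^ Suc m * s" using assms by (auto elim: dvdE)
  have "pderiv p = q ^ Suc m * pderiv s + s * (smult (of_nat (Suc m)) (q ^ m * pderiv q))"
    unfolding s pderiv_mult pderiv_power_Suc by (simp add: algebra_simps)
  also have "\<dots> = q ^ m * (q * pderiv s + smult (of_nat (Suc m)) (s * pderiv q))"
    by (simp add: algebra_simps)
  finally show ?thesis by simp
qed

lemma dvd_higher_pderiv_pow:
  fixes p q :: "real poly"
  assumes "q ^ m dvd p" "k \<le> m"
  shows "q ^ (m - k) dvd (pderiv ^^ k) p"
  using assms(2)
proof (induction k)
  case 0
  then show ?case using assms(1) by simp
next
  case (Suc k)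
  then have "q ^ Suc (m - Suc k) dvd (pderiv ^^ k) p"
    by (metis Suc_diff_Suc Suc_le_lessD less_imp_le_nat)
  then show ?case by (simp add: dvd_pderiv_pow)
qed

lemma coeff_G:
  "coeff ([:1,0,-1:]^m :: real poly) 0 = 1 \<and> coeff ([:1,0,-1:]^m :: real poly) 1 = 0 \<and>
   coeff ([:1,0,-1:]^m :: real poly) 2 = - real m"
proof (induction m)
  case 0
  then show ?case by simp
next
  case (Suc m)
  then show ?case by (simp add: mult_pCons_left coeff_pCons numeral_2_eq_2 algebra_simps)
qed

definition HH :: "nat \<Rightarrow> real poly" where
  "HH r = monom 1 (r - 2) * [:1,0,-1:] ^ Suc r"

lemma HH_zero:
  assumes "k \<le> r" "y = 1 \<or> y = -1"
  shows "poly ((pderiv ^^ k) (HH r)) y = 0"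
proof -
  have "[:1,0,-1:] ^ Suc r dvd HH r" unfolding HH_def by simp
  then have "[:1,0,-1:] ^ (Suc r - k) dvd (pderiv ^^ k) (HH r)"
    using assms by (intro dvd_higher_pderiv_pow) auto
  moreover have "[:1,0,-1:] dvd ([:1,0,-1:] ^ (Suc r - k) :: real poly)"
    using assms by (intro dvd_power) auto
  ultimately have "[:1,0,-1:] dvd (pderiv ^^ k) (HH r)" by (rule dvd_trans[rotated])
  then obtain s where "(pderiv ^^ k) (HH r) = [:1,0,-1:] * s" by (auto elim: dvdE)
  then show ?thesis using assms(2) by auto
qed

lemma HH_nonneg:
  assumes "even r" "\<bar>y\<bar> \<le> 1"
  shows "poly (HH r) y \<ge> 0"
proof -
  have "poly (HH r) y = y ^ (r - 2) * (1 - y^2) ^ Suc r"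
    by (simp add: HH_def poly_monom power2_eq_square algebra_simps)
  moreover have "y ^ (r - 2) \<ge> 0" using assms by (auto intro: zero_le_even_power)
  moreover have "\<bar>y\<bar> * \<bar>y\<bar> \<le> 1" using assms by (intro mult_le_one) auto
  then have "1 - y^2 \<ge> 0" by (simp add: power2_eq_square abs_mult_self_eq)
  ultimately show ?thesis by simp
qed

lemma HH_coeff:
  assumes "even r" "r \<ge> 2" "m \<le> r"
  shows "coeff (HH r) m * (-1)^m = (if m = r - 2 then 1 else 0) - (if m = r then real r + 1 else 0)"
proof -
  have c: "coeff (HH r) m = (if m < r - 2 then 0 else coeff ([:1,0,-1:] ^ Suc r :: real poly) (m - (r - 2)))"
    unfolding HH_def coeff_monom_mult by simp
  consider "m < r - 2" | "m = r - 2" | "m = r - 1" | "m = r" using assms by linarith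
  then show ?thesis
  proof cases
    case 1 then show ?thesis using c assms by auto
  next
    case 2 then show ?thesis using c assms coeff_G[of "Suc r"] by (auto simp: neg_one_even_power)
  next
    case 3
    then have "m - (r - 2) = 1" using assms by simp
    then show ?thesis using c 3 assms coeff_G[of "Suc r"] by auto
  next
    case 4
    then have "m - (r - 2) = 2" using assms by simp
    then show ?thesis using c 4 assms coeff_G[of "Suc r"] by (auto simp: neg_one_even_power)
  qed
qed

lemma HH_sum:
  assumes "even r" "r \<ge> 2"
  shows "(\<Sum>m<Suc r. coeff (HH r) m * (-1)^m) = - real r"
proof -
  have "(\<Sum>m<Suc r. coeff (HH r) m * (-1)^m) =
        (\<Sum>m<Suc r. (if m = r - 2 then 1 else 0) - (if m = r then real r + 1 else 0))"
    using assms by (intro sum.cong) (auto simp: HH_coeff)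
  also have "\<dots> = 1 - (real r + 1)"
    using assms by (simp add: sum_subtractf)
  finally show ?thesis by simp
qed



theorem lemma3p6:
  fixes r n :: nat and A lam :: real
  assumes "even r" and "r \<ge> 2" and "n \<ge> r" and "A > 0" and "lam \<in> {0..1}"
  shows "\<exists>f D. Cr_with_derivs r f D \<and>
           (\<forall>x\<in>{-1..1}. f x \<ge> 0) \<and>
           (\<forall>x\<in>{-1..-1/2}. f x = 0) \<and>
           (\<forall>P :: real poly. degree P \<le> n \<longrightarrow>
              (\<forall>x\<in>{lam - 1 / real n<..<lam}. poly P x \<ge> 0) \<longrightarrow>
              (\<forall>i\<le>r. poly ((pderiv ^^ i) P) lam = D i lam) \<longrightarrow>
              supnorm (\<lambda>x. f x - poly P x) > A * supnorm (D r))"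
proof -
  define H where "H = HH r"
  obtain B0 where B0: "B0 \<ge> 0" "\<And>y. y \<in> {-1..1} \<Longrightarrow> \<bar>poly H y\<bar> \<le> B0"
    using poly_bounded[of H] by blast
  obtain Br where Br: "Br \<ge> 0" "\<And>y. y \<in> {-1..1} \<Longrightarrow> \<bar>poly ((pderiv ^^ r) H) y\<bar> \<le> Br"
    using poly_bounded[of "(pderiv ^^ r) H"] by blast
  define M where "M = B0 + A * Br"
  obtain C where C: "C \<ge> 0" "\<And>P::real poly. \<And>M. degree P \<le> n \<Longrightarrow> (\<forall>x\<in>{-1..1}. \<bar>poly P x\<bar> \<le> M) \<Longrightarrow>
           (\<forall>x\<in>{-1..1}. \<bar>poly ((pderiv^^Suc r) P) x\<bar> \<le> C*M)"
    using lagrange_bound[of n "Suc r"] by blast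
  have M0: "M \<ge> 0" using B0 Br assms(4) by (simp add: M_def)
  define K where "K = C * M"
  have K0: "K \<ge> 0" using C M0 by (simp add: K_def)
  define d where "d = 1 / (K + real n + 2)"
  have npos: "real n \<ge> 2" using assms by simp
  have d0: "d > 0" using K0 npos by (simp add: d_def)
  have dn: "d < 1 / real n" using K0 npos by (simp add: d_def frac_less2)
  have dhalf: "d < 1/2" using K0 npos by (simp add: d_def frac_less2)
  have Kd: "K * d < 1" using K0 npos by (simp add: d_def field_simps)
  define D where "D k x = d ^ (r - k) * pw ((pderiv ^^ k) H) ((x - lam) / d)" for k x
  define f where "f x = D 0 x" for x
  have lam: "0 \<le> lam" "lam \<le> 1" using assms(5) by auto
  have Hz: "poly ((pderiv ^^ k) H) y = 0" if "k \<le> r" "y = 1 \<or> y = -1" for k y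
    unfolding H_def using HH_zero that by blast
  have Cr: "Cr_with_derivs r f D"
    unfolding Cr_with_derivs_def
  proof (intro conjI ballI allI impI)
    fix x show "D 0 x = f x" by (simp add: f_def)
  next
    fix k x assume k: "k < r" and x: "x \<in> {-1..1::real}"
    define Q where "Q = (pderiv ^^ k) H"
    have pQ: "pderiv Q = (pderiv ^^ Suc k) H" by (simp add: Q_def)
    have dpw: "(pw Q has_real_derivative pw (pderiv Q) ((x - lam) / d)) (at ((x - lam) / d))"
      by (rule pw_deriv) (use k Hz[of k] Hz[of "Suc k"] in \<open>auto simp: Q_def\<close>)
    have dg: "((\<lambda>x. (x - lam) / d) has_real_derivative 1 / d) (at x)"
      using d0 by (auto intro!: derivative_eq_intros)
    have d1: "((\<lambda>x. d ^ (r - k) * pw Q ((x - lam) / d)) has_real_derivative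
           d ^ (r - k) * (pw (pderiv Q) ((x - lam) / d) * (1 / d))) (at x)"
      by (intro DERIV_cmult DERIV_chain2[OF dpw dg])
    have eqv: "d ^ (r - k) * (pw (pderiv Q) ((x - lam) / d) * (1 / d)) = D (Suc k) x"
    proof -
      have "r - k = Suc (r - Suc k)" using k by simp
      then have "d ^ (r - k) = d * d ^ (r - Suc k)" by simp
      then show ?thesis using d0 by (simp add: D_def pQ)
    qed
    have Dk: "D k = (\<lambda>x. d ^ (r - k) * pw Q ((x - lam) / d))"
      by (rule ext) (simp add: D_def Q_def)
    have "(D k has_real_derivative D (Suc k) x) (at x)"
      unfolding Dk eqv[symmetric] by (rule d1)
    then show "(D k has_real_derivative D (Suc k) x) (at x within {-1..1})"
      by (rule has_field_derivative_at_within)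
  next
    have eq: "pw ((pderiv ^^ r) H) y = poly ((pderiv ^^ r) H) (max (-1) (min 1 y))" for y
      using Hz[of r 1] Hz[of r "-1"] by (auto simp: pw_def max_def min_def)
    have "D r = (\<lambda>x. poly ((pderiv ^^ r) H) (max (-1) (min 1 ((x - lam) / d))))"
      by (rule ext) (simp add: D_def eq)
    then show "continuous_on {-1..1} (D r)"
      using d0 by (auto intro!: continuous_intros)
  qed
  have fnn: "f x \<ge> 0" for x
  proof -
    have "pw H y \<ge> 0" for y using HH_nonneg[OF assms(1)] by (simp add: pw_def H_def)
    then show ?thesis using d0 by (simp add: f_def D_def)
  qed
  have fz: "f x = 0" if "x \<in> {-1..-1/2}" for x
  proof -
    have "x - lam < - d" using that lam dhalf by auto
    then have "(x - lam) / d < -1" using d0 by (simp add: field_simps)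
    then have "\<not> \<bar>(x - lam) / d\<bar> \<le> 1" by arith
    then show ?thesis unfolding f_def D_def pw_def by simp
  qed
  have pwb: "\<bar>pw Q y\<bar> \<le> B" if "B \<ge> 0" "\<And>y. y \<in> {-1..1} \<Longrightarrow> \<bar>poly Q y\<bar> \<le> B" for Q B y
  proof (cases "\<bar>y\<bar> \<le> 1")
    case True
    then have "y \<in> {-1..1}" by (auto simp: abs_le_iff)
    then show ?thesis using True that by (simp add: pw_def)
  next
    case False
    then show ?thesis using that by (simp add: pw_def)
  qed
  have Drb: "\<bar>D r x\<bar> \<le> Br" for x
    using pwb[OF Br] by (simp add: D_def)
  have fb: "\<bar>f x\<bar> \<le> B0" for x
  proof -
    have "\<bar>pw H y\<bar> \<le> B0" for y using pwb[OF B0] by blast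
    moreover have "d ^ r \<le> 1" using d0 dhalf by (intro power_le_one) auto
    ultimately have "d ^ r * \<bar>pw H ((x - lam) / d)\<bar> \<le> 1 * B0"
      using d0 B0 by (intro mult_mono) auto
    then show ?thesis using d0 by (simp add: f_def D_def abs_mult)
  qed
  have main: "supnorm (\<lambda>x. f x - poly P x) > A * supnorm (D r)"
    if dP: "degree P \<le> n" and nnP: "\<forall>x\<in>{lam - 1 / real n<..<lam}. poly P x \<ge> 0"
      and iP: "\<forall>i\<le>r. poly ((pderiv ^^ i) P) lam = D i lam" for P :: "real poly"
  proof (rule ccontr)
    assume "\<not> ?thesis"
    then have s1: "supnorm (\<lambda>x. f x - poly P x) \<le> A * supnorm (D r)" by simp
    have "supnorm (D r) \<le> Br" unfolding supnorm_def
      by (rule cSUP_least) (auto simp: Drb)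
    then have s2: "supnorm (\<lambda>x. f x - poly P x) \<le> A * Br"
      using s1 assms(4) by (meson mult_left_mono less_imp_le order_trans)
    obtain BP where BP: "\<And>y. y \<in> {-1..1} \<Longrightarrow> \<bar>poly P y\<bar> \<le> BP"
      using poly_bounded[of P] by blast
    have bdd: "bdd_above ((\<lambda>x. \<bar>f x - poly P x\<bar>) ` {-1..1})"
    proof (rule bdd_aboveI2)
      fix x :: real assume "x \<in> {-1..1}"
      then show "\<bar>f x - poly P x\<bar> \<le> B0 + BP" using fb[of x] BP[of x] by linarith
    qed
    have Pb: "\<forall>x\<in>{-1..1}. \<bar>poly P x\<bar> \<le> M"
    proof
      fix x :: real assume x: "x \<in> {-1..1}"
      have "\<bar>f x - poly P x\<bar> \<le> supnorm (\<lambda>x. f x - poly P x)"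
        unfolding supnorm_def by (rule cSUP_upper[OF x bdd])
      then show "\<bar>poly P x\<bar> \<le> M" using s2 fb[of x] by (simp add: M_def)
    qed
    have Kb: "\<bar>poly ((pderiv^^Suc r) P) t\<bar> \<le> K" if "t \<in> {-1..1}" for t
      using C(2)[OF dP Pb] that by (simp add: K_def)
    define x0 where "x0 = lam - d"
    have "\<exists>t. x0 < t \<and> t < lam \<and>
      poly P x0 = (\<Sum>m<Suc r. (poly ((pderiv^^m) P) lam / fact m) * (x0 - lam)^m) +
                  (poly ((pderiv^^Suc r) P) t / fact (Suc r)) * (x0 - lam)^Suc r"
      by (rule Taylor_down[of "Suc r" "\<lambda>m t. poly ((pderiv^^m) P) t" "poly P" x0 lam lam])
         (use d0 in \<open>simp_all add: x0_def\<close>)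
    then obtain t where t: "x0 < t" "t < lam" and
      tay: "poly P x0 = (\<Sum>m<Suc r. (poly ((pderiv^^m) P) lam / fact m) * (x0 - lam)^m) +
                  (poly ((pderiv^^Suc r) P) t / fact (Suc r)) * (x0 - lam)^Suc r" by blast
    have tin: "t \<in> {-1..1}" using t lam d0 dhalf by (auto simp: x0_def)
    have trm: "(poly ((pderiv^^m) P) lam / fact m) * (x0 - lam)^m = d ^ r * (coeff H m * (-1)^m)"
      if m: "m < Suc r" for m
    proof -
      have "poly ((pderiv^^m) P) lam = D m lam" using iP m by simp
      also have "\<dots> = d ^ (r - m) * (fact m * coeff H m)"
        by (simp add: D_def pw_def poly_0_coeff_0 coeff_higher_pderiv pochhammer_fact)
      finally have e: "poly ((pderiv^^m) P) lam = d ^ (r - m) * (fact m * coeff H m)" .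
      have pw: "d ^ (r - m) * d ^ m = d ^ r"
        using m by (simp add: power_add[symmetric])
      have e2: "poly ((pderiv^^m) P) lam / fact m = d ^ (r - m) * coeff H m"
        unfolding e by simp
      have "(poly ((pderiv^^m) P) lam / fact m) * (x0 - lam)^m
            = (d ^ (r - m) * coeff H m) * ((-1)^m * d ^ m)"
        unfolding e2 x0_def by (simp add: power_minus[of d])
      also have "\<dots> = (d ^ (r - m) * d ^ m) * (coeff H m * (-1)^m)"
        by (simp only: mult_ac)
      finally have "(poly ((pderiv^^m) P) lam / fact m) * (x0 - lam)^m
            = (d ^ (r - m) * d ^ m) * (coeff H m * (-1)^m)" .
      then show ?thesis using pw by simp
    qed
    have sumv: "(\<Sum>m<Suc r. (poly ((pderiv^^m) P) lam / fact m) * (x0 - lam)^m) = d ^ r * (- real r)"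
    proof -
      have "(\<Sum>m<Suc r. (poly ((pderiv^^m) P) lam / fact m) * (x0 - lam)^m)
            = (\<Sum>m<Suc r. d ^ r * (coeff H m * (-1)^m))"
        by (rule sum.cong[OF refl], rule trm, simp)
      also have "\<dots> = d ^ r * (- real r)"
        by (simp only: sum_distrib_left[symmetric] H_def HH_sum[OF assms(1,2)])
      finally show ?thesis .
    qed
    have rem: "(poly ((pderiv^^Suc r) P) t / fact (Suc r)) * (x0 - lam)^Suc r \<le> K * d * d ^ r"
    proof -
      have "(poly ((pderiv^^Suc r) P) t / fact (Suc r)) * (x0 - lam)^Suc r
            \<le> \<bar>poly ((pderiv^^Suc r) P) t / fact (Suc r)\<bar> * \<bar>(x0 - lam)^Suc r\<bar>"
        unfolding abs_mult[symmetric] by (rule abs_ge_self)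
      also have "\<dots> \<le> K * d ^ Suc r"
      proof (rule mult_mono)
        have "\<bar>poly ((pderiv^^Suc r) P) t\<bar> / fact (Suc r) \<le> \<bar>poly ((pderiv^^Suc r) P) t\<bar> / 1"
          by (intro divide_left_mono) (auto simp del: fact_Suc)
        then show "\<bar>poly ((pderiv^^Suc r) P) t / fact (Suc r)\<bar> \<le> K"
          using Kb[OF tin] by simp
        have ad: "\<bar>x0 - lam\<bar> = d" using d0 by (simp add: x0_def)
        show "\<bar>(x0 - lam)^Suc r\<bar> \<le> d ^ Suc r" unfolding power_abs ad by simp
      qed (use K0 in auto)
      finally show ?thesis by simp
    qed
    have "poly P x0 \<le> d ^ r * (- real r) + K * d * d ^ r"
      using tay sumv rem by linarith
    also have "\<dots> = d ^ r * (K * d - real r)" by (simp add: algebra_simps)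
    also have "\<dots> < 0"
    proof -
      have "K * d - real r < 0" using Kd assms(2) by linarith
      then show ?thesis using d0 by (simp add: mult_pos_neg)
    qed
    finally have "poly P x0 < 0" .
    moreover have "x0 \<in> {lam - 1 / real n<..<lam}" using dn d0 by (auto simp: x0_def)
    ultimately have "poly P x0 \<ge> 0" using nnP by blast
    with \<open>poly P x0 < 0\<close> show False by linarith
  qed
  show ?thesis
    by (intro exI[of _ f] exI[of _ D] conjI Cr allI impI main) (use fnn fz in blast)+
qed

end
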